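(* For any graph $G$ with vertex set $[n]$, let $$f(G):=\min\{d\ge1:\ \exists \text{ subspaces } \mathcal{L}_1,\dots,\mathcal{L}_n\subseteq\mathbb{C}^d \text{ such that for all distinct } i,j\in[n],\ \mathcal{L}_i\perp\mathcal{L}_j \iff i\not\sim j\}.$$ Then $$f(G)=\min\{\mathrm{cpsd}\text{-}\mathrm{rank}(X):\ X \text{ is an } n\times n \text{ cpsd matrix with } S(X)=G\}.$$
   Context: Graphs are simple (no loops). An $n\times n$ matrix $X$ is completely positive semidefinite (cpsd) if there exist $d\ge1$ and Hermitian positive semidefinite $d\times d$ matrices $P_1,\dots,P_n$ with $X_{ij}=\mathrm{Tr}(P_iP_j)$ for all $i,j$; the cpsd-rank of $X$ is the least such $d$. The support graph $S(X)$ of a symmetric $n\times n$ matrix $X$ is the graph on $[n]$ with $u\sim v$ iff $u\ne v$ and $X_{uv}\neq0$. Orthogonality of subspaces is with respect to the standard inner product on $\mathbb{C}^d$. *)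

theory Defs
  imports "HOL-Analysis.Analysis"
begin

(* Vectors of C^d are represented as functions nat => complex vanishing outside {0..<d};
   d x d matrices as functions nat => nat => complex (only entries below d matter). *)

definition cvecs :: "nat \<Rightarrow> (nat \<Rightarrow> complex) set" where
  "cvecs d = {v. \<forall>i\<ge>d. v i = 0}"

definition cinner :: "nat \<Rightarrow> (nat \<Rightarrow> complex) \<Rightarrow> (nat \<Rightarrow> complex) \<Rightarrow> complex" where
  "cinner d u v = (\<Sum>i<d. u i * cnj (v i))"

definition is_subspace :: "nat \<Rightarrow> (nat \<Rightarrow> complex) set \<Rightarrow> bool" where
  "is_subspace d L \<longleftrightarrow> L \<subseteq> cvecs d \<and> (\<lambda>_. 0) \<in> L \<and>
     (\<forall>u\<in>L. \<forall>v\<in>L. (\<lambda>i. u i + v i) \<in> L) \<and>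
     (\<forall>c. \<forall>u\<in>L. (\<lambda>i. c * u i) \<in> L)"

definition orth :: "nat \<Rightarrow> (nat \<Rightarrow> complex) set \<Rightarrow> (nat \<Rightarrow> complex) set \<Rightarrow> bool" where
  "orth d L M \<longleftrightarrow> (\<forall>u\<in>L. \<forall>v\<in>M. cinner d u v = 0)"

definition hermitian_psd :: "nat \<Rightarrow> (nat \<Rightarrow> nat \<Rightarrow> complex) \<Rightarrow> bool" where
  "hermitian_psd d P \<longleftrightarrow> (\<forall>i<d. \<forall>j<d. P i j = cnj (P j i)) \<and>
     (\<forall>v. 0 \<le> Re (\<Sum>i<d. \<Sum>j<d. cnj (v i) * P i j * v j))"

definition trace_prod :: "nat \<Rightarrow> (nat \<Rightarrow> nat \<Rightarrow> complex) \<Rightarrow> (nat \<Rightarrow> nat \<Rightarrow> complex) \<Rightarrow> complex" where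
  "trace_prod d P Q = (\<Sum>a<d. \<Sum>b<d. P a b * Q b a)"

definition cpsd_factorization :: "nat \<Rightarrow> (nat \<Rightarrow> nat \<Rightarrow> real) \<Rightarrow> nat \<Rightarrow> bool" where
  "cpsd_factorization n X d \<longleftrightarrow> (\<exists>P :: nat \<Rightarrow> nat \<Rightarrow> nat \<Rightarrow> complex.
     (\<forall>i<n. hermitian_psd d (P i)) \<and>
     (\<forall>i<n. \<forall>j<n. complex_of_real (X i j) = trace_prod d (P i) (P j)))"

definition cpsd :: "nat \<Rightarrow> (nat \<Rightarrow> nat \<Rightarrow> real) \<Rightarrow> bool" where
  "cpsd n X \<longleftrightarrow> (\<exists>d\<ge>1. cpsd_factorization n X d)"

definition cpsd_rank :: "nat \<Rightarrow> (nat \<Rightarrow> nat \<Rightarrow> real) \<Rightarrow> nat" where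
  "cpsd_rank n X = (LEAST d. d \<ge> 1 \<and> cpsd_factorization n X d)"

definition simple_graph :: "nat \<Rightarrow> (nat \<Rightarrow> nat \<Rightarrow> bool) \<Rightarrow> bool" where
  "simple_graph n E \<longleftrightarrow> (\<forall>u<n. \<forall>v<n. E u v = E v u) \<and> (\<forall>u<n. \<not> E u u)"

definition support_is :: "nat \<Rightarrow> (nat \<Rightarrow> nat \<Rightarrow> real) \<Rightarrow> (nat \<Rightarrow> nat \<Rightarrow> bool) \<Rightarrow> bool" where
  "support_is n X E \<longleftrightarrow> (\<forall>u<n. \<forall>v<n. u \<noteq> v \<longrightarrow> (X u v \<noteq> 0 \<longleftrightarrow> E u v))"

definition f_graph :: "nat \<Rightarrow> (nat \<Rightarrow> nat \<Rightarrow> bool) \<Rightarrow> nat" where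
  "f_graph n E = (LEAST d. d \<ge> 1 \<and> (\<exists>L :: nat \<Rightarrow> (nat \<Rightarrow> complex) set.
      (\<forall>i<n. is_subspace d (L i)) \<and>
      (\<forall>i<n. \<forall>j<n. i \<noteq> j \<longrightarrow> (orth d (L i) (L j) \<longleftrightarrow> \<not> E i j))))"

end

theory Submission
  imports Defs
begin


lemma swap4: "(\<Sum>a\<in>A. \<Sum>b\<in>B. \<Sum>c\<in>C. \<Sum>e\<in>D. f a b c e) = (\<Sum>c\<in>C. \<Sum>e\<in>D. \<Sum>a\<in>A. \<Sum>b\<in>B. f a b c e)"
proof -
  have "(\<Sum>a\<in>A. \<Sum>b\<in>B. \<Sum>c\<in>C. \<Sum>e\<in>D. f a b c e) = (\<Sum>a\<in>A. \<Sum>c\<in>C. \<Sum>b\<in>B. \<Sum>e\<in>D. f a b c e)"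
    by (rule sum.cong[OF refl], rule sum.swap)
  also have "\<dots> = (\<Sum>a\<in>A. \<Sum>c\<in>C. \<Sum>e\<in>D. \<Sum>b\<in>B. f a b c e)"
    by (rule sum.cong[OF refl], rule sum.cong[OF refl], rule sum.swap)
  also have "\<dots> = (\<Sum>c\<in>C. \<Sum>a\<in>A. \<Sum>e\<in>D. \<Sum>b\<in>B. f a b c e)"
    by (rule sum.swap)
  also have "\<dots> = (\<Sum>c\<in>C. \<Sum>e\<in>D. \<Sum>a\<in>A. \<Sum>b\<in>B. f a b c e)"
    by (rule sum.cong[OF refl], rule sum.swap)
  finally show ?thesis .
qed

lemma trace_gram:
  assumes P: "\<forall>a<d. \<forall>b<d. P a b = (\<Sum>k<K. u k a * cnj (u k b))"
      and Q: "\<forall>a<d. \<forall>b<d. Q a b = (\<Sum>l<M. w l a * cnj (w l b))"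
  shows "trace_prod d P Q = of_real (\<Sum>k<K. \<Sum>l<M. (cmod (cinner d (u k) (w l)))^2)"
proof -
  have "trace_prod d P Q = (\<Sum>a<d. \<Sum>b<d. (\<Sum>k<K. u k a * cnj (u k b)) * (\<Sum>l<M. w l b * cnj (w l a)))"
    unfolding trace_prod_def using P Q by (intro sum.cong refl) auto
  also have "\<dots> = (\<Sum>a<d. \<Sum>b<d. \<Sum>l<M. \<Sum>k<K. (u k a * cnj (w l a)) * (cnj (u k b) * w l b))"
    by (simp add: sum_distrib_left sum_distrib_right mult_ac)
  also have "\<dots> = (\<Sum>l<M. \<Sum>k<K. \<Sum>a<d. \<Sum>b<d. (u k a * cnj (w l a)) * (cnj (u k b) * w l b))"
    by (rule swap4)
  also have "\<dots> = (\<Sum>l<M. \<Sum>k<K. cinner d (u k) (w l) * cnj (cinner d (u k) (w l)))"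
    unfolding cinner_def apply (simp add: sum_distrib_left sum_distrib_right mult_ac)
    by (rule sum.cong[OF refl], rule sum.cong[OF refl], rule sum.swap)
  also have "\<dots> = (\<Sum>k<K. \<Sum>l<M. cinner d (u k) (w l) * cnj (cinner d (u k) (w l)))"
    by (rule sum.swap)
  also have "\<dots> = of_real (\<Sum>k<K. \<Sum>l<M. (cmod (cinner d (u k) (w l)))^2)"
    by (simp only: of_real_sum complex_norm_square)
  finally show ?thesis .
qed

lemma gram_psd: "hermitian_psd d (\<lambda>a b. \<Sum>k<K. u k a * cnj (u k b))"
proof -
  have "(\<Sum>i<d. \<Sum>j<d. cnj (v i) * (\<Sum>k<K. u k i * cnj (u k j)) * v j)
      = (\<Sum>k<K. cnj (\<Sum>j<d. cnj (u k j) * v j) * (\<Sum>j<d. cnj (u k j) * v j))" for v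
  proof -
    have "(\<Sum>i<d. \<Sum>j<d. cnj (v i) * (\<Sum>k<K. u k i * cnj (u k j)) * v j)
       = (\<Sum>i<d. \<Sum>k<K. \<Sum>j<d. (cnj (v i) * u k i) * (cnj (u k j) * v j))"
      apply (simp add: sum_distrib_left sum_distrib_right mult_ac)
      by (rule sum.cong[OF refl], rule sum.swap)
    also have "\<dots> = (\<Sum>k<K. \<Sum>i<d. \<Sum>j<d. (cnj (v i) * u k i) * (cnj (u k j) * v j))"
      by (rule sum.swap)
    also have "\<dots> = (\<Sum>k<K. cnj (\<Sum>j<d. cnj (u k j) * v j) * (\<Sum>j<d. cnj (u k j) * v j))"
      by (simp add: sum_distrib_left sum_distrib_right mult_ac)
    finally show ?thesis .
  qed
  moreover have "(\<Sum>k<K. cnj (\<Sum>j<d. cnj (u k j) * v j) * (\<Sum>j<d. cnj (u k j) * v j))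
     = of_real (\<Sum>k<K. (cmod (\<Sum>j<d. cnj (u k j) * v j))^2)" for v
    unfolding of_real_sum complex_norm_square by (rule sum.cong) (auto simp: mult.commute)
  ultimately have "(\<Sum>i<d. \<Sum>j<d. cnj (v i) * (\<Sum>k<K. u k i * cnj (u k j)) * v j)
     = of_real (\<Sum>k<K. (cmod (\<Sum>j<d. cnj (u k j) * v j))^2)" for v by metis
  then show ?thesis unfolding hermitian_psd_def
    by (simp del: of_real_power add: sum_nonneg mult.commute)
qed



definition quad :: "nat \<Rightarrow> (nat\<Rightarrow>nat\<Rightarrow>complex) \<Rightarrow> (nat\<Rightarrow>complex) \<Rightarrow> complex" where
  "quad D Q v = (\<Sum>i<D. \<Sum>j<D. cnj (v i) * Q i j * v j)"

lemma quad_upd: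
  assumes "k < D"
  shows "quad D Q (\<lambda>i. v i + (if i = k then t else 0)) = quad D Q v + cnj t * (\<Sum>j<D. Q k j * v j)
     + t * (\<Sum>i<D. cnj (v i) * Q i k) + cnj t * t * Q k k"
proof -
  have e: "cnj (v i + (if i = k then t else 0)) * Q i j * (v j + (if j = k then t else 0))
     = cnj (v i) * Q i j * v j + (if i = k then cnj t * (Q i j * v j) else 0)
       + (if j = k then t * (cnj (v i) * Q i j) else 0)
       + (if i = k then (if j = k then cnj t * t * Q i j else 0) else 0)" for i j
    by (auto simp: algebra_simps)
  have s1: "(\<Sum>i<D. \<Sum>j<D. (if i = k then cnj t * (Q i j * v j) else 0)) = cnj t * (\<Sum>j<D. Q k j * v j)"
    using assms by (subst sum.swap) (simp add: sum_distrib_left)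
  have s2: "(\<Sum>i<D. \<Sum>j<D. (if j = k then t * (cnj (v i) * Q i j) else 0)) = t * (\<Sum>i<D. cnj (v i) * Q i k)"
    using assms by (simp add: sum_distrib_left)
  have s3: "(\<Sum>i<D. \<Sum>j<D. (if i = k then (if j = k then cnj t * t * Q i j else 0) else 0)) = cnj t * t * Q k k"
  proof -
    have "(\<Sum>j<D. (if i = k then (if j = k then cnj t * t * Q i j else 0) else 0)) = (if i = k then cnj t * t * Q k k else 0)" for i
      using assms by auto
    then show ?thesis using assms by simp
  qed
  show ?thesis
    unfolding quad_def e sum.distrib s1 s2 s3 ..
qed

lemma quad_zero[simp]: "quad D Q (\<lambda>_. 0) = 0"
  by (simp add: quad_def)

lemma psd_quad: "hermitian_psd D Q \<Longrightarrow> 0 \<le> Re (quad D Q v)"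
  unfolding hermitian_psd_def quad_def by blast

lemma psd_diag:
  assumes "hermitian_psd D Q" "k < D"
  shows "Q k k = of_real (Re (Q k k))" "0 \<le> Re (Q k k)"
proof -
  have "Q k k = cnj (Q k k)" using assms unfolding hermitian_psd_def by blast
  then show "Q k k = of_real (Re (Q k k))" by (simp add: complex_eq_iff)
  have "0 \<le> Re (quad D Q (\<lambda>i. 0 + (if i = k then 1 else 0)))"
    using psd_quad[OF assms(1)] by blast
  then show "0 \<le> Re (Q k k)" using quad_upd[OF assms(2), of Q "\<lambda>_. 0" 1] by simp
qed

lemma herm_B:
  assumes "hermitian_psd (Suc d) Q"
  shows "(\<Sum>i<Suc d. cnj (v i) * Q i d) = cnj (\<Sum>j<Suc d. Q d j * v j)"
proof -
  have h: "\<forall>i<Suc d. Q i d = cnj (Q d i)" using assms unfolding hermitian_psd_def by blast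
  have "cnj (\<Sum>j<Suc d. Q d j * v j) = (\<Sum>j<Suc d. cnj (Q d j) * cnj (v j))"
    by (simp only: cnj_sum complex_cnj_mult)
  also have "\<dots> = (\<Sum>i<Suc d. cnj (v i) * Q i d)"
    by (rule sum.cong[OF refl]) (simp add: h mult.commute)
  finally show ?thesis by simp
qed

lemma col_zero:
  assumes "hermitian_psd (Suc d) Q" "Re (Q d d) = 0"
  shows "(\<Sum>j<Suc d. Q d j * v j) = 0"
proof (rule ccontr)
  define A where "A = (\<Sum>j<Suc d. Q d j * v j)"
  assume "(\<Sum>j<Suc d. Q d j * v j) \<noteq> 0"
  then have A0: "A \<noteq> 0" by (simp add: A_def)
  have Qdd: "Q d d = 0" using psd_diag(1)[OF assms(1), of d] assms(2) by simp
  define c where "c = (\<bar>Re (quad (Suc d) Q v)\<bar> + 1) / (2 * (cmod A)^2)"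
  define t where "t = - of_real c * A"
  have B: "(\<Sum>i<Suc d. cnj (v i) * Q i d) = cnj A" using herm_B[OF assms(1)] by (simp add: A_def)
  have "0 \<le> Re (quad (Suc d) Q (\<lambda>i. v i + (if i = d then t else 0)))"
    using psd_quad[OF assms(1)] by blast
  also have "\<dots> = Re (quad (Suc d) Q v) + Re (cnj t * A + t * cnj A)"
    using quad_upd[of d "Suc d" Q v t] B Qdd by (simp add: A_def)
  also have "Re (cnj t * A + t * cnj A) = - 2 * c * (cmod A)^2"
  proof -
    have "cnj t * A + t * cnj A = - 2 * of_real c * (A * cnj A)"
      by (simp add: t_def algebra_simps)
    also have "\<dots> = of_real (- 2 * c * (cmod A)^2)"
      by (simp add: complex_norm_square[symmetric])
    finally show ?thesis by simp
  qed
  also have "- 2 * c * (cmod A)^2 = - (\<bar>Re (quad (Suc d) Q v)\<bar> + 1)"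
    using A0 by (simp add: c_def field_simps)
  finally show False by linarith
qed

lemma schur_bound:
  assumes "hermitian_psd (Suc d) Q"
  shows "(cmod (\<Sum>j<Suc d. Q d j * v j))^2 / Re (Q d d) \<le> Re (quad (Suc d) Q v)"
proof (cases "Re (Q d d) = 0")
  case True then show ?thesis using psd_quad[OF assms] by simp
next
  case False
  define p where "p = Re (Q d d)"
  have p0: "p > 0" using psd_diag(2)[OF assms, of d] False by (simp add: p_def)
  have Qdd: "Q d d = of_real p" using psd_diag(1)[OF assms, of d] by (simp add: p_def)
  define A where "A = (\<Sum>j<Suc d. Q d j * v j)"
  define t where "t = - A / of_real p"
  have B: "(\<Sum>i<Suc d. cnj (v i) * Q i d) = cnj A" using herm_B[OF assms(1)] by (simp add: A_def)
  have "0 \<le> Re (quad (Suc d) Q (\<lambda>i. v i + (if i = d then t else 0)))"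
    using psd_quad[OF assms(1)] by blast
  also have "\<dots> = Re (quad (Suc d) Q v) + Re (cnj t * A + t * cnj A + cnj t * t * of_real p)"
  proof -
    have "quad (Suc d) Q (\<lambda>i. v i + (if i = d then t else 0)) = quad (Suc d) Q v + (cnj t * A + t * cnj A + cnj t * t * of_real p)"
      using quad_upd[of d "Suc d" Q v t] unfolding B A_def[symmetric] Qdd by (simp only: add.assoc)
    then show ?thesis by (simp only: plus_complex.sel(1))
  qed
  also have "Re (cnj t * A + t * cnj A + cnj t * t * of_real p) = - ((cmod A)^2) / p"
  proof -
    have "cnj t * A + t * cnj A + cnj t * t * of_real p = - (A * cnj A) / of_real p"
      using p0 by (simp add: t_def field_simps)
    also have "\<dots> = of_real (- ((cmod A)^2) / p)"
      by (simp add: complex_norm_square[symmetric])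
    finally show ?thesis by simp
  qed
  finally show ?thesis by (simp add: A_def p_def)
qed

lemma psd_decomp:
  "hermitian_psd d Q \<Longrightarrow> \<exists>q. (\<forall>k. q k \<in> cvecs d) \<and> (\<forall>a<d. \<forall>b<d. Q a b = (\<Sum>k<d. q k a * cnj (q k b)))"
proof (induction d arbitrary: Q)
  case 0
  show ?case by (intro exI[of _ "\<lambda>_ _. 0"]) (simp add: cvecs_def)
next
  case (Suc d)
  note psd = Suc.prems
  define p where "p = Re (Q d d)"
  have Qdd: "Q d d = of_real p" using psd_diag(1)[OF psd, of d] by (simp add: p_def)
  have p0: "p \<ge> 0" using psd_diag(2)[OF psd, of d] by (simp add: p_def)
  have herm: "\<forall>a<Suc d. \<forall>b<Suc d. Q a b = cnj (Q b a)" using psd unfolding hermitian_psd_def by blast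
  have colz: "Q d b = 0" if "p = 0" "b < Suc d" for b
  proof -
    have "(\<Sum>j<Suc d. Q d j * (if j = b then 1 else 0)) = (\<Sum>j<Suc d. if j = b then Q d j else 0)"
      by (rule sum.cong) auto
    also have "\<dots> = Q d b" using that(2) by simp
    finally show ?thesis using col_zero[OF psd, of "\<lambda>j. if j = b then 1 else 0"] that by (simp add: p_def)
  qed
  define Q' where "Q' = (\<lambda>a b. Q a b - Q a d * Q d b / of_real p)"
  have Q'd1: "Q' a d = 0" if "a < Suc d" for a
  proof (cases "p = 0")
    case True
    then have "Q a d = 0" using herm colz that by (metis complex_cnj_zero lessI)
    then show ?thesis by (simp add: Q'_def)
  next
    case False then show ?thesis by (simp add: Q'_def Qdd)
  qed
  have Q'd2: "Q' d b = 0" if "b < Suc d" for b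
  proof (cases "p = 0")
    case True
    then show ?thesis using colz[OF True that] by (simp add: Q'_def)
  next
    case False then show ?thesis by (simp add: Q'_def Qdd)
  qed
  have herm': "\<forall>a<Suc d. \<forall>b<Suc d. Q' a b = cnj (Q' b a)"
  proof (intro allI impI)
    fix a b assume ab: "a < Suc d" "b < Suc d"
    have h1: "cnj (Q b a) = Q a b" using herm ab by (metis complex_cnj_cnj)
    have h2: "cnj (Q b d) = Q d b" using herm ab by (metis complex_cnj_cnj lessI)
    have h3: "cnj (Q d a) = Q a d" using herm ab by (metis complex_cnj_cnj lessI)
    have "cnj (Q' b a) = cnj (Q b a) - cnj (Q b d) * cnj (Q d a) / of_real p"
      unfolding Q'_def by (simp only: complex_cnj_diff complex_cnj_mult complex_cnj_divide complex_cnj_complex_of_real)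
    then show "Q' a b = cnj (Q' b a)" unfolding h1 h2 h3 by (simp add: Q'_def mult.commute)
  qed
  have quadQ': "quad (Suc d) Q' v = quad (Suc d) Q v
      - (\<Sum>i<Suc d. cnj (v i) * Q i d) * (\<Sum>j<Suc d. Q d j * v j) / of_real p" for v
  proof -
    have "(\<Sum>i<Suc d. cnj (v i) * Q i d) * (\<Sum>j<Suc d. Q d j * v j) / of_real p
        = (\<Sum>i<Suc d. \<Sum>j<Suc d. cnj (v i) * Q i d * (Q d j * v j) / of_real p)"
      by (simp only: sum_product sum_divide_distrib)
    also have "\<dots> = (\<Sum>i<Suc d. \<Sum>j<Suc d. cnj (v i) * (Q i d * Q d j / of_real p) * v j)"
      by (intro sum.cong refl) (simp add: divide_inverse mult_ac)
    finally have e: "(\<Sum>i<Suc d. cnj (v i) * Q i d) * (\<Sum>j<Suc d. Q d j * v j) / of_real p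
        = (\<Sum>i<Suc d. \<Sum>j<Suc d. cnj (v i) * (Q i d * Q d j / of_real p) * v j)" .
    have "quad (Suc d) Q' v = (\<Sum>i<Suc d. \<Sum>j<Suc d. cnj (v i) * Q i j * v j - cnj (v i) * (Q i d * Q d j / of_real p) * v j)"
      unfolding quad_def Q'_def by (intro sum.cong refl) (simp add: algebra_simps)
    also have "\<dots> = quad (Suc d) Q v - (\<Sum>i<Suc d. \<Sum>j<Suc d. cnj (v i) * (Q i d * Q d j / of_real p) * v j)"
      unfolding quad_def by (simp only: sum_subtractf)
    finally show ?thesis unfolding e .
  qed
  have psdQ': "0 \<le> Re (quad (Suc d) Q' v)" for v
  proof -
    define A where "A = (\<Sum>j<Suc d. Q d j * v j)"
    have hb: "(\<Sum>i<Suc d. cnj (v i) * Q i d) = cnj A" using herm_B[OF psd, of v] unfolding A_def .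
    have "quad (Suc d) Q' v = quad (Suc d) Q v - cnj A * A / of_real p"
      using quadQ'[of v] unfolding hb A_def[symmetric] .
    also have "cnj A * A / of_real p = of_real ((cmod A)^2 / p)"
      unfolding of_real_divide complex_norm_square by (simp add: mult.commute)
    finally have "Re (quad (Suc d) Q' v) = Re (quad (Suc d) Q v) - (cmod A)^2 / p"
      by (simp only: minus_complex.sel(1) Re_complex_of_real)
    moreover have "(cmod A)^2 / p \<le> Re (quad (Suc d) Q v)"
      using schur_bound[OF psd, of v] unfolding A_def[symmetric] p_def[symmetric] .
    ultimately show ?thesis by linarith
  qed
  have quad_restr: "quad d Q' v = quad (Suc d) Q' v" for v
  proof -
    have z1: "(\<Sum>j<d. cnj (v d) * Q' d j * v j) = 0" using Q'd2 by simp
    have z2: "(\<Sum>i<d. cnj (v i) * Q' i d * v d) = 0" using Q'd1 by simp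
    have "quad (Suc d) Q' v = (\<Sum>i<Suc d. \<Sum>j<d. cnj (v i) * Q' i j * v j)"
      unfolding quad_def
    proof (rule sum.cong[OF refl])
      fix i assume "i \<in> {..<Suc d}"
      then have "cnj (v i) * Q' i d * v d = 0" using Q'd1 by simp
      then show "(\<Sum>j<Suc d. cnj (v i) * Q' i j * v j) = (\<Sum>j<d. cnj (v i) * Q' i j * v j)"
        by (simp only: sum.lessThan_Suc add_0_right)
    qed
    also have "\<dots> = quad d Q' v + (\<Sum>j<d. cnj (v d) * Q' d j * v j)"
      unfolding quad_def by (rule sum.lessThan_Suc)
    finally show ?thesis unfolding z1 by simp
  qed
  have "hermitian_psd d Q'"
    unfolding hermitian_psd_def
  proof (intro conjI allI impI)
    fix a b assume "a < d" "b < d" then show "Q' a b = cnj (Q' b a)" using herm' by (meson less_SucI)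
  next
    fix v show "0 \<le> Re (\<Sum>i<d. \<Sum>j<d. cnj (v i) * Q' i j * v j)"
    proof -
      from psdQ'[of v] quad_restr[of v] have "0 \<le> Re (quad d Q' v)" by simp
      then show ?thesis unfolding quad_def .
    qed
  qed
  from Suc.IH[OF this] obtain q' where q'c: "\<forall>k. q' k \<in> cvecs d"
    and q'e: "\<forall>a<d. \<forall>b<d. Q' a b = (\<Sum>k<d. q' k a * cnj (q' k b))" by blast
  define q where "q = (\<lambda>a. if a < Suc d then Q a d / of_real (sqrt p) else 0)"
  define qn where "qn = (\<lambda>k. if k < d then q' k else q)"
  show ?case
  proof (intro exI[of _ qn] conjI allI impI)
    fix k show "qn k \<in> cvecs (Suc d)"
      using q'c by (auto simp: qn_def q_def cvecs_def)
  next
    fix a b assume ab: "a < Suc d" "b < Suc d"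
    have s1: "(\<Sum>k<d. q' k a * cnj (q' k b)) = Q' a b"
    proof (cases "a < d \<and> b < d")
      case True then show ?thesis using q'e by simp
    next
      case False
      then have "a = d \<or> b = d" using ab by auto
      moreover have "q' k d = 0" for k using q'c by (simp add: cvecs_def)
      ultimately show ?thesis using Q'd1 Q'd2 ab by auto
    qed
    have s2: "q a * cnj (q b) = Q a d * Q d b / of_real p"
    proof -
      have "cnj (Q b d) = Q d b" using herm ab by (metis complex_cnj_cnj lessI)
      moreover have "of_real (sqrt p) * of_real (sqrt p) = (of_real p :: complex)"
        unfolding of_real_mult[symmetric] using p0 by simp
      ultimately show ?thesis using ab by (simp add: q_def)
    qed
    have "(\<Sum>k<Suc d. qn k a * cnj (qn k b)) = (\<Sum>k<d. q' k a * cnj (q' k b)) + q a * cnj (q b)"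
      by (simp add: qn_def)
    also have "\<dots> = Q a b" using s1 s2 by (simp add: Q'_def)
    finally show "Q a b = (\<Sum>k<Suc d. qn k a * cnj (qn k b))" ..
  qed
qed


lemma least_eq:
  fixes A B :: "nat \<Rightarrow> bool"
  assumes AB: "\<And>a. A a \<Longrightarrow> \<exists>b. B b \<and> b \<le> a" and BA: "\<And>b. B b \<Longrightarrow> \<exists>a. A a \<and> a \<le> b"
  shows "(LEAST x. A x) = (LEAST x. B x)"
proof (cases "\<exists>a. A a")
  case True
  then have LA: "A (LEAST x. A x)" by (rule LeastI_ex)
  then obtain b where "B b" "b \<le> (LEAST x. A x)" using AB by blast
  then have LB: "B (LEAST x. B x)" and le1: "(LEAST x. B x) \<le> (LEAST x. A x)"
    by (auto intro: LeastI Least_le order_trans)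
  from LB obtain a where "A a" "a \<le> (LEAST x. B x)" using BA by blast
  then have "(LEAST x. A x) \<le> (LEAST x. B x)" by (meson Least_le order_trans)
  with le1 show ?thesis by simp
next
  case False
  then have "\<not> B b" for b using BA by blast
  with False have "A = B" by auto
  then show ?thesis by simp
qed

lemma cinner_comb:
  "cinner d (\<lambda>a. \<Sum>k<K. c k * u k a) (\<lambda>a. \<Sum>l<M. c' l * w l a)
   = (\<Sum>k<K. \<Sum>l<M. c k * cnj (c' l) * cinner d (u k) (w l))"
proof -
  have "cinner d (\<lambda>a. \<Sum>k<K. c k * u k a) (\<lambda>a. \<Sum>l<M. c' l * w l a)
      = (\<Sum>a<d. \<Sum>l<M. \<Sum>k<K. c k * cnj (c' l) * (u k a * cnj (w l a)))"
    unfolding cinner_def by (simp add: sum_distrib_left sum_distrib_right mult_ac)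
  also have "\<dots> = (\<Sum>l<M. \<Sum>a<d. \<Sum>k<K. c k * cnj (c' l) * (u k a * cnj (w l a)))"
    by (rule sum.swap)
  also have "\<dots> = (\<Sum>l<M. \<Sum>k<K. \<Sum>a<d. c k * cnj (c' l) * (u k a * cnj (w l a)))"
    by (rule sum.cong[OF refl], rule sum.swap)
  also have "\<dots> = (\<Sum>l<M. \<Sum>k<K. c k * cnj (c' l) * cinner d (u k) (w l))"
    unfolding cinner_def by (simp add: sum_distrib_left)
  also have "\<dots> = (\<Sum>k<K. \<Sum>l<M. c k * cnj (c' l) * cinner d (u k) (w l))"
    by (rule sum.swap)
  finally show ?thesis .
qed

lemma sumsq_zero_iff:
  fixes K M :: nat
  shows  "((\<Sum>k<K. \<Sum>l<M. (cmod (z k l))^2) = 0) \<longleftrightarrow> (\<forall>k<K. \<forall>l<M. z k l = 0)"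
proof -
  have "((\<Sum>k<K. \<Sum>l<M. (cmod (z k l))^2) = 0) \<longleftrightarrow> (\<forall>k\<in>{..<K}. (\<Sum>l<M. (cmod (z k l))^2) = 0)"
    by (rule sum_nonneg_eq_0_iff) (simp_all add: sum_nonneg)
  also have "\<dots> \<longleftrightarrow> (\<forall>k<K. \<forall>l<M. (cmod (z k l))^2 = 0)"
    by (auto simp: sum_nonneg_eq_0_iff)
  finally show ?thesis by auto
qed


lemma part_b:
  assumes cp: "cpsd n X" and sup: "support_is n X E"
  shows "\<exists>d. (d \<ge> 1 \<and> (\<exists>L :: nat \<Rightarrow> (nat \<Rightarrow> complex) set.
      (\<forall>i<n. is_subspace d (L i)) \<and>
      (\<forall>i<n. \<forall>j<n. i \<noteq> j \<longrightarrow> (orth d (L i) (L j) \<longleftrightarrow> \<not> E i j)))) \<and> d \<le> cpsd_rank n X"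
proof -
  define r where "r = cpsd_rank n X"
  have "r \<ge> 1 \<and> cpsd_factorization n X r"
    unfolding r_def cpsd_rank_def using cp unfolding cpsd_def by (rule LeastI_ex)
  then obtain P where r1: "r \<ge> 1" and Ppsd: "\<forall>i<n. hermitian_psd r (P i)"
    and PX: "\<forall>i<n. \<forall>j<n. complex_of_real (X i j) = trace_prod r (P i) (P j)"
    unfolding cpsd_factorization_def by blast
  have "\<forall>i\<in>{..<n}. \<exists>q. (\<forall>k. q k \<in> cvecs r) \<and> (\<forall>a<r. \<forall>b<r. P i a b = (\<Sum>k<r. q k a * cnj (q k b)))"
    using Ppsd psd_decomp by blast
  from bchoice[OF this] obtain p where
    pp: "\<forall>i\<in>{..<n}. (\<forall>k. p i k \<in> cvecs r) \<and> (\<forall>a<r. \<forall>b<r. P i a b = (\<Sum>k<r. p i k a * cnj (p i k b)))"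
    by blast
  then have pc: "\<And>i k. i < n \<Longrightarrow> p i k \<in> cvecs r"
    and pe: "\<And>i. i < n \<Longrightarrow> \<forall>a<r. \<forall>b<r. P i a b = (\<Sum>k<r. p i k a * cnj (p i k b))" by auto
  define L where "L i = {v. \<exists>c. v = (\<lambda>a. \<Sum>k<r. c k * p i k a)}" for i
  have sub: "is_subspace r (L i)" if "i < n" for i
    unfolding is_subspace_def
  proof (intro conjI ballI allI)
    show "L i \<subseteq> cvecs r"
      using pc[OF that] by (auto simp: L_def cvecs_def)
    show "(\<lambda>_. 0) \<in> L i" unfolding L_def by (auto intro!: exI[of _ "\<lambda>_. 0"])
  next
    fix u v assume "u \<in> L i" "v \<in> L i"
    then obtain c1 c2 where "u = (\<lambda>a. \<Sum>k<r. c1 k * p i k a)" "v = (\<lambda>a. \<Sum>k<r. c2 k * p i k a)"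
      unfolding L_def by blast
    then show "(\<lambda>a. u a + v a) \<in> L i" unfolding L_def
      by (auto intro!: exI[of _ "\<lambda>k. c1 k + c2 k"] simp: sum.distrib algebra_simps)
  next
    fix c u assume "u \<in> L i"
    then obtain c1 where "u = (\<lambda>a. \<Sum>k<r. c1 k * p i k a)" unfolding L_def by blast
    then show "(\<lambda>a. c * u a) \<in> L i" unfolding L_def
      by (auto intro!: exI[of _ "\<lambda>k. c * c1 k"] simp: sum_distrib_left algebra_simps)
  qed
  have memL: "p i k \<in> L i" if "k < r" for i k
  proof -
    have "(\<Sum>k'<r. (if k' = k then 1 else 0) * p i k' a) = p i k a" for a
    proof -
      have "(\<Sum>k'<r. (if k' = k then 1 else 0) * p i k' a) = (\<Sum>k'<r. if k' = k then p i k' a else 0)"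
        by (rule sum.cong) auto
      also have "\<dots> = p i k a" using that by simp
      finally show ?thesis .
    qed
    then show ?thesis unfolding L_def by (auto intro!: exI[of _ "\<lambda>k'. if k' = k then 1 else 0"])
  qed
  have orth_iff: "orth r (L i) (L j) \<longleftrightarrow> (\<forall>k<r. \<forall>l<r. cinner r (p i k) (p j l) = 0)" for i j
  proof
    assume "orth r (L i) (L j)"
    then show "\<forall>k<r. \<forall>l<r. cinner r (p i k) (p j l) = 0" using memL unfolding orth_def by blast
  next
    assume z: "\<forall>k<r. \<forall>l<r. cinner r (p i k) (p j l) = 0"
    show "orth r (L i) (L j)" unfolding orth_def
    proof (intro ballI)
      fix u v assume "u \<in> L i" "v \<in> L j"
      then obtain c1 c2 where "u = (\<lambda>a. \<Sum>k<r. c1 k * p i k a)" "v = (\<lambda>a. \<Sum>k<r. c2 k * p j k a)"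
        unfolding L_def by blast
      then show "cinner r u v = 0" using z by (simp add: cinner_comb)
    qed
  qed
  have tr: "X i j = (\<Sum>k<r. \<Sum>l<r. (cmod (cinner r (p i k) (p j l)))^2)" if "i < n" "j < n" for i j
  proof -
    have "complex_of_real (X i j) = trace_prod r (P i) (P j)" using PX that by blast
    also have "\<dots> = of_real (\<Sum>k<r. \<Sum>l<r. (cmod (cinner r (p i k) (p j l)))^2)"
      by (rule trace_gram) (use pe that in auto)
    finally show ?thesis by (simp only: of_real_eq_iff)
  qed
  show ?thesis
  proof (intro exI[of _ r] conjI exI[of _ L] allI impI)
    show "1 \<le> r" by (rule r1)
    show "r \<le> cpsd_rank n X" by (simp add: r_def)
  next
    fix i assume "i < n" then show "is_subspace r (L i)" by (rule sub)
  next
    fix i j assume ij: "i < n" "j < n" "i \<noteq> j"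
    have "orth r (L i) (L j) \<longleftrightarrow> X i j = 0"
      unfolding orth_iff tr[OF ij(1,2)] sumsq_zero_iff ..
    also have "\<dots> \<longleftrightarrow> \<not> E i j" using sup ij unfolding support_is_def by blast
    finally show "orth r (L i) (L j) \<longleftrightarrow> \<not> E i j" .
  qed
qed

lemma cinner_zero1[simp]: "cinner d (\<lambda>_. 0) v = 0" by (simp add: cinner_def)
lemma cinner_zero2[simp]: "cinner d u (\<lambda>_. 0) = 0" by (simp add: cinner_def)

lemma part_a:
  assumes d1: "d \<ge> 1" and LE: "\<forall>i<n. \<forall>j<n. i \<noteq> j \<longrightarrow> (orth d (L i) (L j) \<longleftrightarrow> \<not> E i j)"
  shows "\<exists>r. (\<exists>X. cpsd n X \<and> support_is n X E \<and> r = cpsd_rank n X) \<and> r \<le> d"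
proof -
  define Pr where "Pr i j uv \<longleftrightarrow> (fst uv \<in> L i \<or> fst uv = (\<lambda>_. 0)) \<and> (snd uv \<in> L j \<or> snd uv = (\<lambda>_. 0))
      \<and> (\<not> orth d (L i) (L j) \<longrightarrow> cinner d (fst uv) (snd uv) \<noteq> 0)" for i j uv
  have ex: "\<exists>uv. Pr i j uv" for i j
  proof (cases "orth d (L i) (L j)")
    case True then show ?thesis by (intro exI[of _ "(\<lambda>_. 0, \<lambda>_. 0)"]) (simp add: Pr_def)
  next
    case False
    then obtain u v where "u \<in> L i" "v \<in> L j" "cinner d u v \<noteq> 0" unfolding orth_def by blast
    then show ?thesis by (intro exI[of _ "(u, v)"]) (simp add: Pr_def)
  qed
  define W where "W i j = (SOME uv. Pr i j uv)" for i j
  have W: "Pr i j (W i j)" for i j unfolding W_def using ex by (rule someI_ex)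
  define w where "w i k = (if k < n then fst (W i k) else snd (W (k - n) i))" for i k
  have wL: "w i k \<in> L i \<or> w i k = (\<lambda>_. 0)" for i k
    using W[of i k] W[of "k - n" i] unfolding w_def Pr_def by auto
  define P where "P i = (\<lambda>a b. \<Sum>k<2*n. w i k a * cnj (w i k b))" for i
  define X where "X i j = (\<Sum>k<2*n. \<Sum>l<2*n. (cmod (cinner d (w i k) (w j l)))^2)" for i j
  have fac: "cpsd_factorization n X d"
    unfolding cpsd_factorization_def
  proof (intro exI[of _ P] conjI allI impI)
    fix i show "hermitian_psd d (P i)" unfolding P_def by (rule gram_psd)
  next
    fix i j
    show "complex_of_real (X i j) = trace_prod d (P i) (P j)"
      unfolding X_def by (rule trace_gram[symmetric]) (simp_all add: P_def)
  qed
  have "support_is n X E"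
    unfolding support_is_def
  proof (intro allI impI)
    fix u v assume uv: "u < n" "v < n" "u \<noteq> v"
    have "X u v \<noteq> 0 \<longleftrightarrow> (\<exists>k<2*n. \<exists>l<2*n. cinner d (w u k) (w v l) \<noteq> 0)"
      unfolding X_def sumsq_zero_iff by blast
    also have "\<dots> \<longleftrightarrow> \<not> orth d (L u) (L v)"
    proof
      assume "\<exists>k<2*n. \<exists>l<2*n. cinner d (w u k) (w v l) \<noteq> 0"
      then obtain k l where "cinner d (w u k) (w v l) \<noteq> 0" by blast
      then show "\<not> orth d (L u) (L v)" using wL[of u k] wL[of v l] unfolding orth_def by auto
    next
      assume no: "\<not> orth d (L u) (L v)"
      have "w u v = fst (W u v)" "w v (n + u) = snd (W u v)" using uv by (simp_all add: w_def)
      moreover have "cinner d (fst (W u v)) (snd (W u v)) \<noteq> 0" using W[of u v] no by (simp add: Pr_def)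
      moreover have "v < 2 * n" "n + u < 2 * n" using uv by auto
      ultimately show "\<exists>k<2*n. \<exists>l<2*n. cinner d (w u k) (w v l) \<noteq> 0" by metis
    qed
    also have "\<dots> \<longleftrightarrow> E u v" using LE uv by blast
    finally show "X u v \<noteq> 0 \<longleftrightarrow> E u v" .
  qed
  moreover have "cpsd n X" unfolding cpsd_def using d1 fac by blast
  moreover have "cpsd_rank n X \<le> d" unfolding cpsd_rank_def using d1 fac by (auto intro: Least_le)
  ultimately show ?thesis by blast
qed

theorem theorem3p9:
  fixes n :: nat and E :: "nat \<Rightarrow> nat \<Rightarrow> bool"
  assumes "simple_graph n E"
  shows "f_graph n E = (LEAST r. \<exists>X. cpsd n X \<and> support_is n X E \<and> r = cpsd_rank n X)"
  unfolding f_graph_def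
proof (rule least_eq)
  fix a assume "1 \<le> a \<and> (\<exists>L. (\<forall>i<n. is_subspace a (L i)) \<and>
      (\<forall>i<n. \<forall>j<n. i \<noteq> j \<longrightarrow> (orth a (L i) (L j) \<longleftrightarrow> \<not> E i j)))"
  then show "\<exists>b. (\<exists>X. cpsd n X \<and> support_is n X E \<and> b = cpsd_rank n X) \<and> b \<le> a"
    using part_a by blast
next
  fix b assume "\<exists>X. cpsd n X \<and> support_is n X E \<and> b = cpsd_rank n X"
  then show "\<exists>a. (1 \<le> a \<and> (\<exists>L. (\<forall>i<n. is_subspace a (L i)) \<and>
      (\<forall>i<n. \<forall>j<n. i \<noteq> j \<longrightarrow> (orth a (L i) (L j) \<longleftrightarrow> \<not> E i j)))) \<and> a \<le> b"
    using part_b by blast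
qed
end
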